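(* Let $k\ge2\sqrt2$ be real. For $x=e^{i\theta}$ on the unit circle (with $\cos\theta\ne0$) set $$y_{1}(x)=\frac{k+\sqrt{k^2-16\cos^2\theta\,(3-4\cos^2\theta)}}{4\cos\theta}.$$ Then $|y_1(x)|\ge1$ for all such $x$.
   Context: $y_1(x)$ is the root of larger absolute value in $y$ of $(x+x^{-1})y^2-ky-(x^3+x^{-3})=0$ (which equals $-y^3R_k(x/y,1/(xy))$ for $R_k(x,y)=y^3-y+x^3-x+kxy$). Here $\sqrt{\cdot}$ is the principal square root. *)

theory Defs
  imports "HOL-Analysis.Analysis"
begin

definition y1 :: "real \<Rightarrow> real \<Rightarrow> complex" where
  "y1 k \<theta> = (complex_of_real k
      + csqrt (complex_of_real (k^2 - 16 * (cos \<theta>)^2 * (3 - 4 * (cos \<theta>)^2))))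
      / complex_of_real (4 * cos \<theta>)"

end

theory Submission
  imports Defs
begin

theorem lemma2:
  fixes k \<theta> :: real
  assumes "k \<ge> 2 * sqrt 2"
    and "cos \<theta> \<noteq> 0"
  shows "cmod (y1 k \<theta>) \<ge> 1"
proof -
  define c where "c = cos \<theta>"
  define D where "D = k^2 - 16 * c^2 * (3 - 4 * c^2)"
  have c0: "c \<noteq> 0" using assms(2) c_def by simp
  have c1: "\<bar>c\<bar> \<le> 1" using c_def by simp
  have r2: "sqrt 2 ^ 2 = 2" by simp
  have rpos: "sqrt 2 > 0" by simp
  have k8: "k^2 \<ge> 8"
  proof -
    have "(2 * sqrt 2)^2 \<le> k^2" using assms(1) rpos
      by (intro power_mono) auto
    thus ?thesis using r2 by (simp add: power_mult_distrib)
  qed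
  have kpos: "k > 0" using assms(1) rpos by linarith
  have y: "y1 k \<theta> = (of_real k + csqrt (of_real D)) / of_real (4 * c)"
    unfolding y1_def c_def D_def by simp
  show ?thesis
  proof (cases "D \<ge> 0")
    case True
    define s where "s = \<bar>c\<bar>"
    have spos: "s > 0" using c0 s_def by simp
    have s1: "s \<le> 1" using c1 s_def by simp
    have "y1 k \<theta> = of_real ((k + sqrt D) / (4 * c))"
      using y True by (simp add: csqrt_of_real)
    hence "cmod (y1 k \<theta>) = \<bar>(k + sqrt D) / (4 * c)\<bar>"
      by (simp only: norm_of_real)
    hence cm: "cmod (y1 k \<theta>) = (k + sqrt D) / (4 * s)"
      using True kpos by (simp add: s_def abs_divide abs_mult)
    have key: "k + sqrt D \<ge> 4 * s"
    proof (cases "4 * s \<le> k")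
      case True then show ?thesis using \<open>D \<ge> 0\<close> by (smt (verit) real_sqrt_ge_zero)
    next
      case False
      have ss: "16 * s^2 > k^2"
      proof -
        have "k^2 < (4 * s)^2" using False kpos by (intro power_strict_mono) auto
        thus ?thesis by (simp add: power_mult_distrib)
      qed
      define a where "a = sqrt 2 / 2"
      have a2: "a^2 = 1/2" using r2 by (simp add: a_def power_divide)
      have apos: "a > 0" by (simp add: a_def)
      have sa: "s \<ge> a"
      proof -
        have "s^2 \<ge> a^2" using ss k8 a2 by linarith
        thus ?thesis using power2_le_imp_le[of a s] spos by simp
      qed
      have fa: "8 * a^3 - 8 * a + k \<ge> 0"
      proof -
        have "a^3 = a * a^2" by (simp add: power3_eq_cube power2_eq_square)
        hence "8* a^3 - 8* a = -4* a" using a2 by simp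
        thus ?thesis using assms(1) a_def by linarith
      qed
      have p: "(s - a) * (s^2 + s* a + a^2 - 1) \<ge> 0"
      proof (rule mult_nonneg_nonneg)
        show "s - a \<ge> 0" using sa by simp
        have "s^2 \<ge> a^2" using sa apos by (intro power_mono) auto
        moreover have "s* a \<ge> a* a" using sa apos by (intro mult_right_mono) auto
        ultimately show "s^2 + s* a + a^2 - 1 \<ge> 0" using a2 by (simp add: power2_eq_square)
      qed
      have f: "8* s^3 - 8* s + k \<ge> 0"
      proof -
        have "8* s^3 - 8* s + k = 8*((s - a) * (s^2 + s* a + a^2 - 1)) + (8 * a^3 - 8 * a + k)"
          by (simp add: algebra_simps power2_eq_square power3_eq_cube)
        thus ?thesis using p fa by simp
      qed
      have cs: "c^2 = s^2" by (simp add: s_def)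
      have "D - (4* s - k)^2 = 8 * s * (8* s^3 - 8* s + k)"
        unfolding D_def cs by (simp add: algebra_simps power2_eq_square power3_eq_cube)
      moreover have "8 * s * (8 * s^3 - 8 * s + k) \<ge> 0" using f spos by simp
      ultimately have "(4 * s - k)^2 \<le> D" by linarith
      hence "sqrt ((4* s - k)^2) \<le> sqrt D" by (rule real_sqrt_le_mono)
      hence "4* s - k \<le> sqrt D" by simp
      thus ?thesis by simp
    qed
    show ?thesis unfolding cm using key spos by simp
  next
    case False
    have cs: "0 < c^2" using c0 by simp
    have t: "c^2 < 1/2"
    proof -
      have "16 * c^2 * (3 - 4 * c^2) > 8" using False k8 D_def by simp
      hence "(4* c^2 - 1) * (2* c^2 - 1) < 0" by (simp add: algebra_simps)
      show ?thesis
      proof (rule ccontr)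
        assume "\<not> c^2 < 1/2"
        hence "4* c^2 - 1 > 0" "2* c^2 - 1 \<ge> 0" by auto
        hence "(4* c^2 - 1) * (2* c^2 - 1) \<ge> 0" by simp
        thus False using \<open>(4* c^2 - 1) * (2* c^2 - 1) < 0\<close> by linarith
      qed
    qed
    have "y1 k \<theta> = Complex (k / (4* c)) (sqrt (-D) / (4* c))"
      using y False by (simp add: complex_eq_iff)
    hence "cmod (y1 k \<theta>) = sqrt ((k / (4* c))^2 + (sqrt (-D) / (4* c))^2)"
      by (simp add: cmod_def)
    also have "(k / (4* c))^2 + (sqrt (-D) / (4* c))^2 = (k^2 - D) / (16 * c^2)"
      using False by (simp add: power_divide power_mult_distrib add_divide_distrib diff_divide_distrib)
    also have "\<dots> = 3 - 4 * c^2" using cs unfolding D_def by (simp add: field_simps)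
    finally have "cmod (y1 k \<theta>) = sqrt (3 - 4 * c^2)" .
    moreover have "sqrt (3 - 4* c^2) \<ge> sqrt 1" using t by (intro real_sqrt_le_mono) simp
    ultimately show ?thesis by simp
  qed
qed

end
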